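(* Let $k\in\{0,1,2,\dots\}$ and define the polynomial \[ V_k(x)=2\cdot\frac{(2k+2)!}{\left(-\tfrac12\right)_{2k+2}}\sum_{\ell=0}^{2k+1}\frac{(-1)^\ell\,\left(\ell+\tfrac12\right)_{2k+1-\ell}}{(2k+1-\ell)!\,(\ell+1)}\,x^{\ell+1}, \] and the function \[ \psi_k(x)=-\frac{(2k+2)!}{\pi\left(-\tfrac12\right)_{2k+2}}\,x^{1/2}(1-x)^{2k+1/2},\qquad x\in[0,1]. \] Then $\psi_k(x)>0$ for $x\in(0,1)$, $\int_0^1\psi_k(s)\,ds=1$, and \[ 2\,\mathrm{PV}\!\int_0^1\frac{\psi_k(s)}{x-s}\,ds=V_k'(x)\qquad\text{for all }x\in(0,1), \] where $\mathrm{PV}$ denotes the Cauchy principal value integral. (These are the variational (Euler–Lagrange) conditions on the support identifying $\psi_k(x)\,dx$ as the equilibrium measure of $V_k$, i.e.\ the limiting mean eigenvalue density of the unitary ensemble $\frac{1}{Z_n}e^{-n\,\mathrm{tr}\,V_k(M)}dM$, which is supported on $[0,1]$ and vanishes like $(1-x)^{2k+1/2}$ at the right endpoint.)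
   Context: $(a)_m=a(a+1)\cdots(a+m-1)$ denotes the Pochhammer symbol, with $(a)_0=1$. The equilibrium measure $\mu_V$ of an external field $V$ is the unique minimizer of $I_V(\mu)=\iint\log\frac{1}{|x-y|}d\mu(x)d\mu(y)+\int V\,d\mu$ over Borel probability measures $\mu$ on $\mathbb R$; on its support it satisfies $2\int\log|x-y|\,d\mu(y)-V(x)=\text{const}$, whose derivative on the interior of the support is the principal value equation above. *)

theory Defs
  imports "HOL-Analysis.Analysis"
begin

definition V :: "nat \<Rightarrow> real \<Rightarrow> real" where
  "V k x = 2 * (fact (2*k+2) / pochhammer (-1/2) (2*k+2)) *
     (\<Sum>l = 0..2*k+1. (-1)^l * pochhammer (real l + 1/2) (2*k+1-l)
        / (fact (2*k+1-l) * (real l + 1)) * x^(l+1))"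

definition psi :: "nat \<Rightarrow> real \<Rightarrow> real" where
  "psi k x = - (fact (2*k+2) / (pi * pochhammer (-1/2) (2*k+2)))
     * x powr (1/2) * (1 - x) powr (real (2*k) + 1/2)"

definition has_pv_integral :: "(real \<Rightarrow> real) \<Rightarrow> real \<Rightarrow> real \<Rightarrow> real \<Rightarrow> real \<Rightarrow> bool" where
  "has_pv_integral f a b c I \<longleftrightarrow>
     ((\<lambda>e. integral {a..c-e} f + integral {c+e..b} f) \<longlongrightarrow> I) (at_right 0)"

end

theory Submission
  imports Defs
begin


definition uu :: "real \<Rightarrow> real" where "uu s = sqrt s * sqrt (1 - s)"
definition ff :: "nat \<Rightarrow> real \<Rightarrow> real" where "ff n s = sqrt s * (1 - s)^n * sqrt (1 - s)"

lemma D_sqrt1: "0 < s \<Longrightarrow> (sqrt has_real_derivative 1/(2 * sqrt s)) (at s)"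
  using DERIV_real_sqrt[of s] by (simp add: divide_simps mult.commute)

lemma D_sqrt2: "s < 1 \<Longrightarrow> ((\<lambda>s. sqrt (1 - s)) has_real_derivative -1/(2 * sqrt (1-s))) (at s)"
proof -
  assume "s < 1"
  have "((\<lambda>s. sqrt (1 - s)) has_real_derivative (1/(2 * sqrt (1-s))) * (0 - 1)) (at s)"
    by (rule DERIV_chain2[OF D_sqrt1]) (use \<open>s<1\<close> in \<open>auto intro!: derivative_eq_intros\<close>)
  thus ?thesis by simp
qed

lemma D_pow: "s < 1 \<Longrightarrow> ((\<lambda>s. (1 - s)^n) has_real_derivative -(real n) * (1-s)^n/(1-s)) (at s)"
proof -
  assume s: "s < 1"
  have "((\<lambda>s. (1 - s)^n) has_real_derivative real n * (1-s)^(n-1) * (0 - 1)) (at s)"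
    by (auto intro!: derivative_eq_intros)
  moreover have "real n * (1-s)^(n-1) = real n * (1-s)^n/(1-s)"
    using s by (cases n) auto
  ultimately show ?thesis by simp
qed

lemma D_uu: "0 < s \<Longrightarrow> s < 1 \<Longrightarrow> (uu has_real_derivative (1 - 2 * s)/(2 * uu s)) (at s)"
proof -
  assume s: "0 < s" "s < 1"
  have "((\<lambda>s. sqrt s * sqrt (1 - s)) has_real_derivative 1/(2 * sqrt s) * sqrt (1-s) + (-1/(2 * sqrt (1-s))) * sqrt s) (at s)"
    by (rule DERIV_mult[OF D_sqrt1 D_sqrt2]) (use s in auto)
  moreover have "1/(2 * sqrt s) * sqrt (1-s) + (-1/(2 * sqrt (1-s))) * sqrt s = (1 - 2 * s)/(2 * uu s)"
    using s by (simp add: uu_def field_simps)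
  ultimately show ?thesis unfolding uu_def[abs_def] by simp
qed

lemma uu_sq: "0 \<le> s \<Longrightarrow> s \<le> 1 \<Longrightarrow> (uu s)^2 = s * (1 - s)"
  by (simp add: uu_def power_mult_distrib)

lemma D_asin: "0 < s \<Longrightarrow> s < 1 \<Longrightarrow> ((\<lambda>s. arcsin (2 * s-1)) has_real_derivative 1/uu s) (at s)"
proof -
  assume s: "0 < s" "s < 1"
  have "((\<lambda>s. arcsin (2 * s-1)) has_real_derivative inverse (sqrt (1 - (2 * s-1)\<^sup>2)) * (2 * 1 - 0)) (at s)"
    by (rule DERIV_chain2[OF DERIV_arcsin]) (use s in \<open>auto intro!: derivative_eq_intros\<close>)
  moreover have "sqrt (1 - (2 * s-1)\<^sup>2) = 2 * uu s"
  proof -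
    have "1 - (2 * s-1)\<^sup>2 = (2 * uu s)^2" proof -
      have h: "uu s * uu s = s * (1-s)" using uu_sq[of s] s by (simp add: power2_eq_square)
      show ?thesis using h unfolding power2_eq_square by algebra
    qed
    moreover have "uu s \<ge> 0" using s by (simp add: uu_def)
    ultimately show ?thesis by (metis real_sqrt_abs abs_of_nonneg mult_nonneg_nonneg zero_le_numeral)
  qed
  ultimately show ?thesis by (simp add: divide_simps mult.commute)
qed

definition BB :: "nat \<Rightarrow> real" where "BB n = - pi * pochhammer (-1/2) (n+2) / fact (n+2)"

lemma cont_uu: "continuous_on A uu"
  unfolding uu_def[abs_def] by (intro continuous_intros)

lemma uu_pos: "0 < s \<Longrightarrow> s < 1 \<Longrightarrow> uu s > 0"
  by (simp add: uu_def)

lemma Phi_exists: "\<exists>\<Phi>. continuous_on {0..1} \<Phi> \<and> (\<forall>s\<in>{0<..<1}. (\<Phi> has_real_derivative ff n s) (at s)) \<and> \<Phi> 1 - \<Phi> 0 = BB n"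
proof (induction n)
  case 0
  define \<Phi> where "\<Phi> s = (2 * s - 1) / 4 * uu s + arcsin (2 * s - 1) / 8" for s
  have "continuous_on {0..1} \<Phi>"
    unfolding \<Phi>_def[abs_def] by (intro continuous_intros cont_uu) auto
  moreover have "(\<Phi> has_real_derivative ff 0 s) (at s)" if s: "s \<in> {0<..<1}" for s
  proof -
    have "(\<Phi> has_real_derivative (2 * 1 - 0) / 4 * uu s + (1 - 2 * s)/(2 * uu s) * ((2 * s - 1) / 4) + 1/uu s / 8) (at s)"
      unfolding \<Phi>_def[abs_def] using s
      by (intro derivative_intros DERIV_mult D_uu D_asin DERIV_cdivide) auto
    moreover have "(2 * 1 - 0) / 4 * uu s + (1 - 2 * s)/(2 * uu s) * ((2 * s - 1) / 4) + 1/uu s / 8 = ff 0 s"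
    proof -
      have h: "uu s * uu s = s * (1-s)" using uu_sq[of s] s by (simp add: power2_eq_square)
      have "uu s > 0" using s uu_pos by auto
      then show ?thesis using h by (simp add: ff_def uu_def[symmetric] field_simps)
    qed
    ultimately show ?thesis by simp
  qed
  moreover have "\<Phi> 1 - \<Phi> 0 = BB 0"
    by (simp add: \<Phi>_def uu_def BB_def numeral_2_eq_2 pochhammer_Suc)
  ultimately show ?case by blast
next
  case (Suc n)
  then obtain \<Phi> where cP: "continuous_on {0..1} \<Phi>" and dP: "\<forall>s\<in>{0<..<1}. (\<Phi> has_real_derivative ff n s) (at s)"
    and vP: "\<Phi> 1 - \<Phi> 0 = BB n" by blast
  define g where "g s = (s * sqrt s) * ((1-s)^(Suc n) * sqrt (1-s))" for s
  define \<Psi> where "\<Psi> s = (g s + (real n + 3/2) * \<Phi> s) / (real n + 3)" for s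
  have "continuous_on {0..1} \<Psi>"
    unfolding \<Psi>_def[abs_def] g_def by (intro continuous_intros cP) auto
  moreover have "(\<Psi> has_real_derivative ff (Suc n) s) (at s)" if s: "s \<in> {0<..<1}" for s
  proof -
    have "(\<Psi> has_real_derivative ((1 * sqrt s + 1/(2 * sqrt s) * s) * ((1-s)^(Suc n) * sqrt (1-s))
         + ((-(real (Suc n)) * (1-s)^(Suc n)/(1-s)) * sqrt (1-s) + (-1/(2 * sqrt (1-s))) * (1-s)^(Suc n)) * (s * sqrt s)
         + (real n + 3/2) * ff n s) / (real n + 3)) (at s)"
      unfolding \<Psi>_def[abs_def] g_def using s dP
      by (intro derivative_intros DERIV_mult D_sqrt1 D_sqrt2 D_pow DERIV_cdivide DERIV_add DERIV_cmult) auto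
    moreover have "((1 * sqrt s + 1/(2 * sqrt s) * s) * ((1-s)^(Suc n) * sqrt (1-s))
         + ((-(real (Suc n)) * (1-s)^(Suc n)/(1-s)) * sqrt (1-s) + (-1/(2 * sqrt (1-s))) * (1-s)^(Suc n)) * (s * sqrt s)
         + (real n + 3/2) * ff n s) / (real n + 3) = ff (Suc n) s"
    proof -
      have "\<And>a b t p. a > 0 \<Longrightarrow> b > 0 \<Longrightarrow> a * a = s \<Longrightarrow> b * b = t \<Longrightarrow> t = 1 - s \<Longrightarrow>
         ((1 * a + 1/(2 * a) * s) * (t^(Suc n) * b)
         + ((-(real (Suc n)) * t^(Suc n)/t) * b + (-1/(2 * b)) * t^(Suc n)) * (s * a)
         + (real n + 3/2) * (a * t^n * b)) / (real n + 3) = a * t^(Suc n) * b"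
      proof -
        fix a b t p :: real
        assume h: "a > 0" "b > 0" "a * a = s" "b * b = t" "t = 1 - s"
        have "t > 0" using h(2,4) by (metis mult_pos_pos)
        have st: "s + t = 1" using h(5) by simp
        have n3: "real n + 3 \<noteq> 0" by linarith
        have num: "(1 * a + 1/(2 * a) * s) * (t^(Suc n) * b)
         + ((-(real (Suc n)) * t^(Suc n)/t) * b + (-1/(2 * b)) * t^(Suc n)) * (s * a)
         + (real n + 3/2) * (a * t^n * b) = (real n + 3) * (a * t^(Suc n) * b)"
        proof -
          obtain P where P: "P = t^n" by blast
          have "(1 * a + 1/(2 * a) * s) * ((t * P) * b)
         + ((-(real (Suc n)) * (t * P)/t) * b + (-1/(2 * b)) * (t * P)) * (s * a)
         + (real n + 3/2) * (a * P * b) = (real n + 3) * (a * (t * P) * b)"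
            using \<open>t > 0\<close> h(1,2) apply (simp add: field_simps)
            unfolding h(3)[symmetric] h(4)[symmetric] using st h(3,4) apply algebra done
          then show ?thesis by (simp add: P)
        qed
        then show "((1 * a + 1/(2 * a) * s) * (t^(Suc n) * b)
         + ((-(real (Suc n)) * t^(Suc n)/t) * b + (-1/(2 * b)) * t^(Suc n)) * (s * a)
         + (real n + 3/2) * (a * t^n * b)) / (real n + 3) = a * t^(Suc n) * b"
          using n3 by simp
      qed
      from this[of "sqrt s" "sqrt (1-s)" "1-s"] s show ?thesis by (simp add: ff_def mult.assoc)
    qed
    ultimately show ?thesis by simp
  qed
  moreover have "\<Psi> 1 - \<Psi> 0 = BB (Suc n)"
  proof -
    have "\<Psi> 1 - \<Psi> 0 = ((real n + 3/2) * (\<Phi> 1 - \<Phi> 0)) / (real n + 3)"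
      unfolding \<Psi>_def g_def by (simp add: diff_divide_distrib[symmetric] right_diff_distrib)
    also have "\<dots> = (real n + 3/2) / (real n + 3) * BB n" using vP by simp
    also have "\<dots> = BB (Suc n)"
      by (simp add: BB_def pochhammer_Suc field_simps)
    finally show ?thesis .
  qed
  ultimately show ?case by blast
qed



definition aa :: "nat \<Rightarrow> nat \<Rightarrow> real" where
  "aa n l = (-1)^l * pochhammer (real l + 1/2) (n+1-l) / fact (n+1-l)"
definition TT :: "nat \<Rightarrow> real \<Rightarrow> real" where
  "TT n x = (\<Sum>l = 0..n+1. (-1)^l * pochhammer (real l + 1/2) (n+1-l) / fact (n+1-l) * x^l)"

lemma TT_aa: "TT n x = (\<Sum>l = 0..n+1. aa n l * x^l)"
  by (simp add: TT_def aa_def)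

lemma alg_rec: fixes F M j A s :: real assumes "F > 0" "M > 0"
  shows "s * (A * (j + 1/2 + M)) / (M * F) = s * A / F - (- s) * ((j + 1/2) * A) / (M * F)"
  using assms by (simp add: field_simps)
lemma alg_0: fixes F N P :: real assumes "F > 0" "N > 0"
  shows "P * (N - 1/2) / (N * F) = P / F + (-1/2) * P / (N * F)"
  using assms by (simp add: field_simps)

lemma aa_rec: "j \<le> n \<Longrightarrow> aa (Suc n) (Suc j) = aa n (Suc j) - aa n j"
proof -
  assume "j \<le> n"
  then obtain m where n: "n = j + m" using le_Suc_ex by blast
  define A where "A = pochhammer (real j + 3/2) m"
  have e1: "pochhammer (real (Suc j) + 1/2) (Suc m) = A * (real j + 1/2 + (real m + 1))"
    by (simp add: A_def pochhammer_Suc add.commute add.left_commute)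
  have e2: "pochhammer (real (Suc j) + 1/2) m = A"
    by (simp add: A_def add.commute add.left_commute)
  have e3: "pochhammer (real j + 1/2) (Suc m) = (real j + 1/2) * A"
    by (simp add: A_def pochhammer_rec add.commute add.left_commute)
  have q1: "aa (Suc n) (Suc j) = (-1)^(Suc j) * (A * (real j + 1/2 + (real m + 1))) / fact (Suc m)"
    unfolding aa_def n using e1 by (simp add: Suc_diff_le)
  have q2: "aa n (Suc j) = (-1)^(Suc j) * A / fact m"
    unfolding aa_def n using e2 by simp
  have q3: "aa n j = (-1)^j * ((real j + 1/2) * A) / fact (Suc m)"
    unfolding aa_def n using e3 by (simp add: Suc_diff_le)
  have q4: "fact (Suc m) = (real m + 1) * fact m" by (simp add: fact_Suc)
  show ?thesis unfolding q1 q2 q3 q4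
    using alg_rec[where F="fact m" and M="real m + 1" and j="real j" and A=A and s="(-1)^Suc j"] by simp
qed

lemma aa_last: "aa (Suc n) (Suc (Suc n)) = - aa n (Suc n)"
  by (simp add: aa_def)

lemma aa_0: "aa (Suc n) 0 = aa n 0 + pochhammer (-1/2) (n+2) / fact (n+2)"
proof -
  define P where "P = pochhammer (1/2::real) (Suc n)"
  have q1: "aa (Suc n) 0 = P * ((real n + 2) - 1/2) / fact (Suc (Suc n))"
    by (simp add: aa_def P_def pochhammer_Suc[of "1/2::real" "Suc n"])
  have q2: "aa n 0 = P / fact (Suc n)" by (simp add: aa_def P_def)
  have q3: "pochhammer (-1/2::real) (n+2) = (-1/2) * P"
  proof -
    have "pochhammer (-1/2::real) (Suc (Suc n)) = (-1/2) * pochhammer (-1/2 + 1) (Suc n)"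
      by (rule pochhammer_rec)
    moreover have "(-1/2::real) + 1 = 1/2" by simp
    ultimately show ?thesis by (simp add: P_def numeral_2_eq_2)
  qed
  have q4: "fact (Suc (Suc n)) = (real n + 2) * fact (Suc n)" by (simp add: fact_Suc)
  have q5: "fact (n+2) = (real n + 2) * fact (Suc n)" by (simp add: fact_Suc)
  have "(fact (Suc n) :: real) > 0" by (simp del: fact_Suc)
  then show ?thesis unfolding q1 q2 q3 q4 q5
    using alg_0[where F="fact (Suc n)" and N="real n + 2" and P=P] by (simp del: fact_Suc)
qed

lemma TT_rec: "TT (Suc n) x = (1 - x) * TT n x + pochhammer (-1/2) (n+2) / fact (n+2)"
proof -
  have L: "TT (Suc n) x = aa (Suc n) 0 + (\<Sum>j = 0..n. (aa n (Suc j) - aa n j) * x^(Suc j)) - aa n (Suc n) * x^(Suc (Suc n))"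
  proof -
    have "TT (Suc n) x = (\<Sum>l = 0..Suc (Suc n). aa (Suc n) l * x^l)" by (simp add: TT_aa)
    also have "\<dots> = aa (Suc n) 0 + (\<Sum>j = 0..Suc n. aa (Suc n) (Suc j) * x^(Suc j))"
      by (rule trans[OF sum.atLeast0_atMost_Suc_shift]) simp
    also have "(\<Sum>j = 0..Suc n. aa (Suc n) (Suc j) * x^(Suc j)) = (\<Sum>j = 0..n. aa (Suc n) (Suc j) * x^(Suc j)) + aa (Suc n) (Suc (Suc n)) * x^(Suc (Suc n))"
      by (simp add: sum.atLeast0_atMost_Suc)
    also have "(\<Sum>j = 0..n. aa (Suc n) (Suc j) * x^(Suc j)) = (\<Sum>j = 0..n. (aa n (Suc j) - aa n j) * x^(Suc j))"
      by (rule sum.cong) (auto simp: aa_rec)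
    finally show ?thesis by (simp add: aa_last)
  qed
  have T1: "TT n x = aa n 0 + (\<Sum>j = 0..n. aa n (Suc j) * x^(Suc j))"
  proof -
    have "TT n x = (\<Sum>l = 0..Suc n. aa n l * x^l)" by (simp add: TT_aa)
    also have "\<dots> = aa n 0 + (\<Sum>j = 0..n. aa n (Suc j) * x^(Suc j))"
      by (rule trans[OF sum.atLeast0_atMost_Suc_shift]) simp
    finally show ?thesis .
  qed
  have T2: "x * TT n x = (\<Sum>j = 0..n. aa n j * x^(Suc j)) + aa n (Suc n) * x^(Suc (Suc n))"
  proof -
    have "x * TT n x = (\<Sum>l = 0..Suc n. aa n l * x^(Suc l))"
      by (simp add: TT_aa sum_distrib_left algebra_simps)
    also have "\<dots> = (\<Sum>j = 0..n. aa n j * x^(Suc j)) + aa n (Suc n) * x^(Suc (Suc n))"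
      by (rule sum.atLeast0_atMost_Suc)
    finally show ?thesis .
  qed
  have "(1 - x) * TT n x = TT n x - x * TT n x" by (simp add: algebra_simps)
  also have "\<dots> = aa n 0 + (\<Sum>j = 0..n. (aa n (Suc j) - aa n j) * x^(Suc j)) - aa n (Suc n) * x^(Suc (Suc n))"
    apply (subst T2) apply (subst T1) by (simp add: sum_subtractf left_diff_distrib)
  finally show ?thesis using L aa_0[of n] by simp
qed


definition DD :: "nat \<Rightarrow> real \<Rightarrow> real \<Rightarrow> real" where
  "DD n x s = ff n s / (x - s) - x * (1 - x)^(n+1) / ((x - s) * uu s)"

lemma alg_H0: fixes U s x :: real assumes "U > 0" "x \<noteq> s" "U * U = s * (1 - s)"
  shows "- ((1 - 2 * s)/(2 * U)) + (x - 1/2) * (1/U) = U / (x - s) - x * (1 - x)^(0+1) / ((x - s) * U)"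
proof -
  obtain d where dd: "d = x - s" by blast
  have d0: "d \<noteq> 0" using assms dd by simp
  have "U / d - x * (1 - x) / (d * U) = (U * U - x * (1 - x)) / (d * U)"
    using assms(1) d0 by (simp add: diff_divide_distrib)
  also have "U * U - x * (1 - x) = d * (s + x - 1)" unfolding dd using assms(3) by algebra
  also have "d * (s + x - 1) / (d * U) = (s + x - 1) / U" using d0 by simp
  also have "\<dots> = - ((1 - 2 * s)/(2 * U)) + (x - 1/2) * (1/U)" using assms by (simp add: field_simps)
  finally show ?thesis using dd by simp
qed
lemma uu_01: "uu 0 = 0" "uu 1 = 0" by (simp_all add: uu_def)

lemma H_exists:
  assumes x: "0 < x" "x < 1"
  shows "\<exists>H. continuous_on {0..1} H \<and> (\<forall>s\<in>{0<..<1}-{x}. (H has_real_derivative DD n x s) (at s)) \<and> H 1 - H 0 = - pi * TT n x"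
proof (induction n)
  case 0
  define H where "H s = - uu s + (x - 1/2) * arcsin (2 * s - 1)" for s
  have "continuous_on {0..1} H"
    unfolding H_def[abs_def] by (intro continuous_intros cont_uu) auto
  moreover have "(H has_real_derivative DD 0 x s) (at s)" if s: "s \<in> {0<..<1}-{x}" for s
  proof -
    have "(H has_real_derivative - ((1 - 2 * s)/(2 * uu s)) + (x - 1/2) * (1/uu s)) (at s)"
      unfolding H_def[abs_def] using s
      by (intro derivative_intros DERIV_mult D_uu D_asin DERIV_cmult) auto
    moreover have "- ((1 - 2 * s)/(2 * uu s)) + (x - 1/2) * (1/uu s) = DD 0 x s"
    proof -
      have h: "uu s * uu s = s * (1-s)" using uu_sq[of s] s by (simp add: power2_eq_square)
      have "uu s > 0" using s uu_pos by auto
      moreover have "ff 0 s = uu s" by (simp add: ff_def uu_def)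
      ultimately show ?thesis unfolding DD_def using h alg_H0[of "uu s" x s] s by simp
    qed
    ultimately show ?thesis by simp
  qed
  moreover have "H 1 - H 0 = - pi * TT 0 x"
    by (simp add: H_def uu_01 TT_def algebra_simps)
  ultimately show ?case by blast
next
  case (Suc n)
  then obtain H where cH: "continuous_on {0..1} H" and dH: "\<forall>s\<in>{0<..<1}-{x}. (H has_real_derivative DD n x s) (at s)"
    and vH: "H 1 - H 0 = - pi * TT n x" by blast
  obtain \<Phi> where cP: "continuous_on {0..1} \<Phi>" and dP: "\<forall>s\<in>{0<..<1}. (\<Phi> has_real_derivative ff n s) (at s)"
    and vP: "\<Phi> 1 - \<Phi> 0 = BB n" using Phi_exists by blast
  define G where "G s = \<Phi> s + (1 - x) * H s" for s
  have "continuous_on {0..1} G"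
    unfolding G_def[abs_def] by (intro continuous_intros cP cH)
  moreover have "(G has_real_derivative DD (Suc n) x s) (at s)" if s: "s \<in> {0<..<1}-{x}" for s
  proof -
    have "(G has_real_derivative ff n s + (1 - x) * DD n x s) (at s)"
      unfolding G_def[abs_def] using s dP dH
      by (intro derivative_intros DERIV_add DERIV_cmult) auto
    moreover have "ff n s + (1 - x) * DD n x s = DD (Suc n) x s"
    proof -
      have "x - s \<noteq> 0" using s by auto
      moreover have "ff (Suc n) s = (1 - s) * ff n s" by (simp add: ff_def)
      ultimately show ?thesis unfolding DD_def by (simp add: field_simps)
    qed
    ultimately show ?thesis by simp
  qed
  moreover have "G 1 - G 0 = - pi * TT (Suc n) x"
  proof -
    have "G 1 - G 0 = (\<Phi> 1 - \<Phi> 0) + (1 - x) * (H 1 - H 0)" by (simp add: G_def algebra_simps)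
    also have "\<dots> = BB n + (1 - x) * (- pi * TT n x)" using vP vH by simp
    also have "\<dots> = - pi * TT (Suc n) x" by (simp add: TT_rec BB_def algebra_simps)
    finally show ?thesis .
  qed
  ultimately show ?case by blast
qed



lemma alg_L: fixes U w s x :: real
  assumes U: "U > 0" and w: "w > 0" and xs: "x \<noteq> s" and UU: "U * U = s * (1 - s)" and ww: "w * w = x * (1 - x)"
    and M: "M = x + s - 2 * x * s + 2 * w * U" and M0: "M > 0"
  shows "(1 / M * (0 + 1 - 2 * x * 1 + 2 * w * ((1 - 2 * s) / (2 * U))) - 1 / (x - s) * (0 - 1)) / w = 1 / ((x - s) * U)"
proof -
  obtain d where dd: "d = x - s" by blast
  have d0: "d \<noteq> 0" using xs dd by simp
  have "(1 / M * (0 + 1 - 2 * x * 1 + 2 * w * ((1 - 2 * s) / (2 * U))) - 1 / d * (0 - 1)) / w = 1 / (d * U)"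
  proof -
    have key: "d * ((1 - 2 * x) * U + w * (1 - 2 * s)) + M * U = w * M"
    proof -
      have "U * (d * ((1 - 2 * x) * U + w * (1 - 2 * s)) + M * U) = U * (w * M)"
        unfolding dd M using UU ww by algebra
      then show ?thesis using U by simp
    qed
    show ?thesis using U w M0 d0 apply (simp add: field_simps)
      using key apply algebra done
  qed
  then show ?thesis using dd by simp
qed

lemma M_pos:
  assumes x: "0 < x" "x < 1" and s: "0 \<le> s" "s \<le> 1" and w: "w \<ge> 0"
  shows "x + s - 2 * x * s + 2 * w * uu s > 0"
proof -
  have u: "uu s \<ge> 0" using s by (simp add: uu_def)
  have a: "x * (1 - s) \<ge> 0" "s * (1 - x) \<ge> 0" using x s by auto
  have "x * (1 - s) + s * (1 - x) > 0"
  proof (cases "s < 1")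
    case True then have "x * (1 - s) > 0" using x by auto
    then show ?thesis using a by linarith
  next
    case False then have "s = 1" using s by auto
    then show ?thesis using x by auto
  qed
  moreover have "w * uu s \<ge> 0" using u w by simp
  ultimately show ?thesis by (simp add: algebra_simps)
qed

lemma D_lnM:
  assumes s: "0 < s" "s < 1" and M0: "x + s - 2 * x * s + 2 * w * uu s > 0"
  shows "((\<lambda>s. ln (x + s - 2 * x * s + 2 * w * uu s)) has_real_derivative
     1 / (x + s - 2 * x * s + 2 * w * uu s) * (0 + 1 - 2 * x * 1 + 2 * w * ((1 - 2 * s) / (2 * uu s)))) (at s)"
  by (rule DERIV_chain2[where f=ln and g="\<lambda>s. x + s - 2 * x * s + 2 * w * uu s" and x=s, OF DERIV_ln_divide[OF M0]])
     (intro derivative_intros DERIV_cmult D_uu s)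

lemma PV_main:
  assumes x: "0 < x" "x < 1" and g: "\<And>s. s \<in> {0..1} \<Longrightarrow> g s = K * ff n s / (x - s)"
  shows "((\<lambda>e. integral {0..x-e} g + integral {x+e..1} g) \<longlongrightarrow> K * (- pi * TT n x)) (at_right 0)"
proof -
  obtain H where cH: "continuous_on {0..1} H" and dH: "\<forall>s\<in>{0<..<1}-{x}. (H has_real_derivative DD n x s) (at s)"
    and vH: "H 1 - H 0 = - pi * TT n x" using H_exists[OF x, of n] by blast
  define w where "w = uu x"
  have w0: "w > 0" using uu_pos x by (simp add: w_def)
  have ww: "w * w = x * (1 - x)" using uu_sq[of x] x by (simp add: w_def power2_eq_square)
  define M where "M s = x + s - 2 * x * s + 2 * w * uu s" for s
  have Mpos: "M s > 0" if "s \<in> {0..1}" for s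
    unfolding M_def using M_pos[OF x, of s w] that w0 by auto
  define c where "c = x * (1 - x)^(n+1)"
  define LM where "LM = (\<lambda>s. ln (M s))"
  have cM: "continuous_on {0..1} (\<lambda>s. ln (M s))"
  proof -
    have Mnz: "\<forall>s\<in>{0..1}. x + s - 2 * x * s + 2 * w * uu s \<noteq> 0" using Mpos unfolding M_def by force
    show ?thesis unfolding M_def by (intro continuous_intros cont_uu Mnz)
  qed
  have dM: "((\<lambda>s. ln (M s)) has_real_derivative
     1 / M s * (0 + 1 - 2 * x * 1 + 2 * w * ((1 - 2 * s) / (2 * uu s)))) (at s)" if "s \<in> {0<..<1}" for s
    unfolding M_def using D_lnM[of s x w] that Mpos[of s] unfolding M_def by auto
  have key: "K * (DD n x s + c * ((1 / M s * (0 + 1 - 2 * x * 1 + 2 * w * ((1 - 2 * s) / (2 * uu s))) - 1 / (x - s) * (0 - 1)) / w)) = g s"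
    if s: "s \<in> {0<..<1}" "s \<noteq> x" for s
  proof -
    have U: "uu s > 0" using uu_pos s by auto
    have UU: "uu s * uu s = s * (1 - s)" using uu_sq[of s] s by (simp add: power2_eq_square)
    have "(1 / M s * (0 + 1 - 2 * x * 1 + 2 * w * ((1 - 2 * s) / (2 * uu s))) - 1 / (x - s) * (0 - 1)) / w = 1 / ((x - s) * uu s)"
      by (rule alg_L[OF U w0 _ UU ww M_def]) (use s Mpos[of s] in auto)
    then show ?thesis using g[of s] s unfolding DD_def c_def by (simp add: algebra_simps diff_divide_distrib)
  qed
  have ev: "eventually (\<lambda>e. K * (H (x - e) - H (x + e) + (H 1 - H 0)) + K * c / w * (ln (M (x - e)) - ln (M (x + e)))
       = integral {0..x-e} g + integral {x+e..1} g) (at_right 0)"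
    unfolding eventually_at_right_field
  proof (intro exI[of _ "min x (1 - x)"] conjI allI impI)
    show "0 < min x (1 - x)" using x by simp
    fix e :: real assume e: "0 < e" "e < min x (1 - x)"
    define G1 where "G1 s = K * (H s + c * ((LM s - ln (x - s)) / w))" for s
    define G2 where "G2 s = K * (H s + c * ((LM s - ln (s - x)) / w))" for s
    have I1: "(g has_integral (G1 (x - e) - G1 0)) {0..x-e}"
    proof (rule fundamental_theorem_of_calculus_interior)
      show "0 \<le> x - e" using e by simp
      have "continuous_on {0..x-e} H" using cH by (rule continuous_on_subset) (use e in auto)
      moreover have "continuous_on {0..x-e} LM" using cM[folded LM_def] by (rule continuous_on_subset) (use e in auto)
      ultimately show "continuous_on {0..x-e} G1"
        unfolding G1_def[abs_def] using e w0 by (intro continuous_intros) auto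
      fix s assume s: "s \<in> {0<..<x-e}"
      then have s': "s \<in> {0<..<1}" "s \<noteq> x" using e by auto
      have "(G1 has_real_derivative K * (DD n x s + c * ((1 / M s * (0 + 1 - 2 * x * 1 + 2 * w * ((1 - 2 * s) / (2 * uu s))) - 1 / (x - s) * (0 - 1)) / w))) (at s)"
        unfolding G1_def[abs_def] using s s' e dH dM[of s, folded LM_def]
        by (intro derivative_intros DERIV_cmult DERIV_add DERIV_cdivide DERIV_diff) auto
      then show "(G1 has_vector_derivative g s) (at s)"
        using key[OF s'] by (simp add: has_real_derivative_iff_has_vector_derivative)
    qed
    have I2: "(g has_integral (G2 1 - G2 (x + e))) {x+e..1}"
    proof (rule fundamental_theorem_of_calculus_interior)
      show "x + e \<le> 1" using e by simp
      have "continuous_on {x+e..1} H" using cH by (rule continuous_on_subset) (use e x in auto)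
      moreover have "continuous_on {x+e..1} LM" using cM[folded LM_def] by (rule continuous_on_subset) (use e x in auto)
      ultimately show "continuous_on {x+e..1} G2"
        unfolding G2_def[abs_def] using e w0 by (intro continuous_intros) auto
      fix s assume s: "s \<in> {x+e<..<1}"
      then have s': "s \<in> {0<..<1}" "s \<noteq> x" using e x by auto
      have "(G2 has_real_derivative K * (DD n x s + c * ((1 / M s * (0 + 1 - 2 * x * 1 + 2 * w * ((1 - 2 * s) / (2 * uu s))) - 1 / (s - x) * (1 - 0)) / w))) (at s)"
        unfolding G2_def[abs_def] using s s' e dH dM[of s, folded LM_def]
        by (intro derivative_intros DERIV_cmult DERIV_add DERIV_cdivide DERIV_diff) auto
      moreover have "1 / (s - x) * (1 - 0) = 1 / (x - s) * (0 - 1)"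
        using s' by (simp add: divide_simps)
      ultimately show "(G2 has_vector_derivative g s) (at s)"
        using key[OF s'] by (simp add: has_real_derivative_iff_has_vector_derivative)
    qed
    have M01: "M 0 = x" "M 1 = 1 - x" by (simp_all add: M_def uu_01)
    have "integral {0..x-e} g + integral {x+e..1} g = (G1 (x - e) - G1 0) + (G2 1 - G2 (x + e))"
      using I1 I2 by (simp add: integral_unique)
    also have "\<dots> = K * (H (x - e) - H (x + e) + (H 1 - H 0)) + K * c / w * (ln (M (x - e)) - ln (M (x + e)))"
      unfolding G1_def G2_def LM_def M01 using w0 by (simp add: field_simps)
    finally show "K * (H (x - e) - H (x + e) + (H 1 - H 0)) + K * c / w * (ln (M (x - e)) - ln (M (x + e)))
       = integral {0..x-e} g + integral {x+e..1} g" by simp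
  qed
  have xi: "x \<in> interior {0..1::real}" using x by simp
  have iH: "isCont H x" using continuous_on_interior[OF cH xi] .
  have iM: "isCont (\<lambda>s. ln (M s)) x" using continuous_on_interior[OF cM xi] .
  have t1: "((\<lambda>e. x - e) \<longlongrightarrow> x) (at_right (0::real))"
    using tendsto_diff[OF tendsto_const[of x] tendsto_ident_at[of 0 "{0<..}"]] by simp
  have t2: "((\<lambda>e. x + e) \<longlongrightarrow> x) (at_right (0::real))"
    using tendsto_add[OF tendsto_const[of x] tendsto_ident_at[of 0 "{0<..}"]] by simp
  have "((\<lambda>e. K * (H (x - e) - H (x + e) + (H 1 - H 0)) + K * c / w * (ln (M (x - e)) - ln (M (x + e))))
      \<longlongrightarrow> K * (H x - H x + (H 1 - H 0)) + K * c / w * (ln (M x) - ln (M x))) (at_right 0)"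
    by (intro tendsto_intros isCont_tendsto_compose[OF iH t1] isCont_tendsto_compose[OF iH t2]
        isCont_tendsto_compose[OF iM t1] isCont_tendsto_compose[OF iM t2])
  then have "((\<lambda>e. K * (H (x - e) - H (x + e) + (H 1 - H 0)) + K * c / w * (ln (M (x - e)) - ln (M (x + e))))
      \<longlongrightarrow> K * (- pi * TT n x)) (at_right 0)" using vH by simp
  then show ?thesis using ev by (rule Lim_transform_eventually)
qed



lemma psi_ff: assumes "s \<in> {0..1}"
  shows "psi k s = - (fact (2*k+2) / (pi * pochhammer (-1/2) (2*k+2))) * ff (2*k) s"
proof -
  have s: "0 \<le> s" "s \<le> 1" using assms by auto
  have e1: "s powr (1/2) = sqrt s" using s by (simp add: powr_half_sqrt)
  have e2: "(1 - s) powr (real (2*k) + 1/2) = (1 - s)^(2*k) * sqrt (1 - s)"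
  proof (cases "s = 1")
    case True then show ?thesis by simp
  next
    case False then have "1 - s > 0" using s by simp
    have "(1 - s) powr (real (2*k) + 1/2) = (1 - s) powr real (2*k) * (1 - s) powr (1/2)"
      by (rule powr_add)
    also have "(1 - s) powr real (2*k) = (1 - s)^(2*k)" by (rule powr_realpow) fact
    also have "(1 - s) powr (1/2) = sqrt (1 - s)" using \<open>1 - s > 0\<close> by (simp add: powr_half_sqrt)
    finally show ?thesis .
  qed
  show ?thesis unfolding psi_def ff_def e1 e2 by (simp add: mult.assoc)
qed

lemma poch_neg: "pochhammer (-1/2::real) (2*k+2) < 0"
proof -
  have "pochhammer (-1/2::real) (Suc (2*k+1)) = (-1/2) * pochhammer (-1/2 + 1) (2*k+1)"
    by (rule pochhammer_rec)
  moreover have "pochhammer (-1/2 + 1::real) (2*k+1) > 0" by (intro pochhammer_pos) simp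
  ultimately show ?thesis by (simp add: mult_neg_pos)
qed

lemma alg_c: fixes a b y r :: real assumes "r \<ge> 0"
  shows "a / (b * (r + 1)) * ((r + 1) * y) = a / b * y"
proof -
  have "r + 1 \<noteq> 0" using assms by simp
  have "a / (b * (r + 1)) * ((r + 1) * y) = (a * y * (r + 1)) / (b * (r + 1))" by simp
  also have "\<dots> = a * y / b" using \<open>r + 1 \<noteq> 0\<close> by (rule nonzero_mult_divide_mult_cancel_right)
  finally show ?thesis by simp
qed

theorem mainTheorem1:
  fixes k :: nat
  shows "(\<forall>x\<in>{0<..<1}. psi k x > 0)
    \<and> (psi k has_integral 1) {0..1}
    \<and> (\<forall>x\<in>{0<..<1}. \<exists>I. has_pv_integral (\<lambda>s. psi k s / (x - s)) 0 1 x I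
                          \<and> 2 * I = deriv (V k) x)"
proof -
  define P where "P = pochhammer (-1/2::real) (2*k+2)"
  define F where "F = (fact (2*k+2) :: real)"
  define K where "K = - (F / (pi * P))"
  have P0: "P < 0" unfolding P_def by (rule poch_neg)
  have F0: "F > 0" unfolding F_def by simp
  have K0: "K > 0" unfolding K_def using P0 F0 by (simp add: divide_pos_neg mult_pos_neg pi_gt_zero)
  have psiK: "psi k s = K * ff (2*k) s" if "s \<in> {0..1}" for s
    using psi_ff[OF that, of k] by (simp add: K_def F_def P_def)
  have part1: "\<forall>x\<in>{0<..<1}. psi k x > 0"
  proof
    fix x :: real assume x: "x \<in> {0<..<1}"
    then have "ff (2*k) x > 0" by (simp add: ff_def)
    then show "psi k x > 0" using psiK[of x] x K0 by simp
  qed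
  have part2: "(psi k has_integral 1) {0..1}"
  proof -
    obtain \<Phi> where cP: "continuous_on {0..1} \<Phi>" and dP: "\<forall>s\<in>{0<..<1}. (\<Phi> has_real_derivative ff (2*k) s) (at s)"
      and vP: "\<Phi> 1 - \<Phi> 0 = BB (2*k)" using Phi_exists by blast
    have "(psi k has_integral ((\<lambda>s. K * \<Phi> s) 1 - (\<lambda>s. K * \<Phi> s) 0)) {0..1}"
    proof (rule fundamental_theorem_of_calculus_interior)
      show "continuous_on {0..1} (\<lambda>s. K * \<Phi> s)" by (intro continuous_intros cP)
      fix s :: real assume s: "s \<in> {0<..<1}"
      have "((\<lambda>s. K * \<Phi> s) has_real_derivative K * ff (2*k) s) (at s)"
        using dP s by (intro DERIV_cmult) auto
      then show "((\<lambda>s. K * \<Phi> s) has_vector_derivative psi k s) (at s)"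
        using psiK[of s] s by (simp add: has_real_derivative_iff_has_vector_derivative)
    qed simp
    moreover have "K * \<Phi> 1 - K * \<Phi> 0 = 1"
    proof -
      have "K * \<Phi> 1 - K * \<Phi> 0 = K * BB (2*k)" using vP by (simp add: right_diff_distrib[symmetric])
      also have "BB (2*k) = - pi * P / F" unfolding BB_def P_def F_def by simp
      also have "K * (- pi * P / F) = 1" unfolding K_def using P0 F0 pi_gt_zero
        by (simp add: field_simps)
      finally show ?thesis .
    qed
    ultimately show ?thesis by simp
  qed
  have part3: "\<forall>x\<in>{0<..<1}. \<exists>I. has_pv_integral (\<lambda>s. psi k s / (x - s)) 0 1 x I \<and> 2 * I = deriv (V k) x"
  proof
    fix x :: real assume x: "x \<in> {0<..<1}"
    define I where "I = K * (- pi * TT (2*k) x)"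
    have "has_pv_integral (\<lambda>s. psi k s / (x - s)) 0 1 x I"
      unfolding has_pv_integral_def I_def
      by (rule PV_main) (use x psiK in auto)
    moreover have "2 * I = deriv (V k) x"
    proof -
      define c where "c l = (-1)^l * pochhammer (real l + 1/2) (2*k+1-l) / (fact (2*k+1-l) * (real l + 1))" for l
      have Veq: "V k = (\<lambda>x. 2 * (F / P) * (\<Sum>l = 0..2*k+1. c l * x^(l+1)))"
        by (rule ext) (simp add: V_def c_def F_def P_def)
      have "(V k has_real_derivative 2 * (F / P) * (\<Sum>l = 0..2*k+1. c l * (real (l+1) * x^l))) (at x)"
        unfolding Veq apply (intro derivative_intros DERIV_cmult DERIV_sum)
        subgoal for l using DERIV_pow[of "l+1" x] by simp
        done
      then have "deriv (V k) x = 2 * (F / P) * (\<Sum>l = 0..2*k+1. c l * (real (l+1) * x^l))"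
        by (rule DERIV_imp_deriv)
      also have "(\<Sum>l = 0..2*k+1. c l * (real (l+1) * x^l)) = TT (2*k) x"
        unfolding TT_def
      proof (rule sum.cong[OF refl])
        fix l assume "l \<in> {0..2*k+1}"
        have r: "real (l+1) = real l + 1" by simp
        show "c l * (real (l+1) * x^l) = (-1)^l * pochhammer (real l + 1/2) (2*k+1-l) / fact (2*k+1-l) * x^l"
          unfolding c_def r by (rule alg_c) simp
      qed
      also have "2 * (F / P) * TT (2*k) x = 2 * I"
        unfolding I_def K_def using pi_gt_zero by (simp add: field_simps)
      finally show ?thesis by simp
    qed
    ultimately show "\<exists>I. has_pv_integral (\<lambda>s. psi k s / (x - s)) 0 1 x I \<and> 2 * I = deriv (V k) x" by blast
  qed
  show ?thesis using part1 part2 part3 by blast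
qed

end
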